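(* For every $m\ge 2$, the determinant of the $m$th order $2$-dimensional Pascal tensor satisfies $f(m,2)=\left[(m-1)!\right]^m$.
   Context: The $m$th order $n$-dimensional Pascal tensor is $\mathcal{P}=(p_{i_1\dots i_m})$ with $p_{i_1\dots i_m}=\frac{(i_1+\dots+i_m-m)!}{(i_1-1)!\cdots(i_m-1)!}$, $i_1,\dots,i_m\in\{1,\dots,n\}$ (for $m=2$ the symmetric Pascal matrix, with ordinary determinant). The determinant of a symmetric tensor $\mathcal{A}$ is the resultant of the system $\mathcal{A}\mathbf{x}^{m-1}=\mathbf{0}$, where $(\mathcal{A}\mathbf{x}^{m-1})_i=\sum_{i_2,\dots,i_m}a_{i i_2\dots i_m}x_{i_2}\cdots x_{i_m}$; $f(m,n)$ denotes $\det(\mathcal{P})$. For $n=2$ this is the Sylvester resultant of the two binary forms $(\mathcal{P}\mathbf{x}^{m-1})_1=\sum_{k=0}^{m-1}a_kx_1^{m-1-k}x_2^k$ and $(\mathcal{P}\mathbf{x}^{m-1})_2=\sum_{k=0}^{m-1}b_kx_1^{m-1-k}x_2^k$ with $a_k=\binom{m-1}{k}k!$, $b_k=\binom{m-1}{k}(k+1)!$, i.e. the determinant of the $2(m-1)\times 2(m-1)$ matrix whose first $m-1$ rows are successive right-shifts of $(a_0,\dots,a_{m-1},0,\dots,0)$ and whose last $m-1$ rows are successive right-shifts of $(b_0,\dots,b_{m-1},0,\dots,0)$. *)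

theory Defs
  imports "Jordan_Normal_Form.Determinant"
begin

text \<open>Entry of the Pascal tensor, indices given as a list (i_1,...,i_m), each i_j \<ge> 1:
  p = (i_1+...+i_m - m)! / ((i_1-1)! ... (i_m-1)!)  (an exact integer division).\<close>
definition pascal_entry :: "nat list \<Rightarrow> nat" where
  "pascal_entry is = fact (sum_list (map (\<lambda>i. i - 1) is)) div prod_list (map (\<lambda>i. fact (i - 1)) is)"

text \<open>Coefficient of x_1^(m-1-k) x_2^k in (P x^(m-1))_i for the 2-dimensional Pascal tensor
  (P symmetric, so it is binom(m-1,k) times the entry with m-1-k indices 1 and k indices 2).\<close>
definition pascal2_coeff :: "nat \<Rightarrow> nat \<Rightarrow> nat \<Rightarrow> int" where
  "pascal2_coeff m i k =
     int ((m - 1) choose k) * int (pascal_entry (i # replicate (m - 1 - k) 1 @ replicate k 2))"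

text \<open>Sylvester matrix of the two binary forms (P x^(m-1))_1 and (P x^(m-1))_2, of size 2(m-1).\<close>
definition pascal2_sylvester :: "nat \<Rightarrow> int mat" where
  "pascal2_sylvester m = mat (2 * (m - 1)) (2 * (m - 1))
     (\<lambda>(r, c). if r < m - 1
        then (if r \<le> c \<and> c - r \<le> m - 1 then pascal2_coeff m 1 (c - r) else 0)
        else (let r' = r - (m - 1) in
              if r' \<le> c \<and> c - r' \<le> m - 1 then pascal2_coeff m 2 (c - r') else 0))"

definition pascal_det2 :: "nat \<Rightarrow> int" where
  "pascal_det2 m = det (pascal2_sylvester m)"

end

theory Submission
  imports Defs
begin

definition al :: "nat \<Rightarrow> int \<Rightarrow> int" where
  "al N k = (if 0 \<le> k \<and> k \<le> int N then int (N choose nat k) * fact (nat k) else 0)"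
definition be :: "nat \<Rightarrow> int \<Rightarrow> int" where
  "be N k = (if 0 \<le> k \<and> k \<le> int N then int (N choose nat k) * fact (nat k + 1) else 0)"

lemma choose_fact_step:
  assumes "j < N"
  shows "(N choose (j+1)) * fact (j+1) = (N choose j) * fact j * (N - j)"
proof -
  define d where "d = N - (j+1)"
  have dj: "N - j = Suc d" using assms unfolding d_def by simp
  have 1: "fact j * fact (Suc d) * (N choose j) = fact N"
    using assms binomial_fact_lemma[of j N] dj by (metis less_imp_le)
  have 2: "fact (j+1) * fact d * (N choose (j+1)) = fact N"
    using assms binomial_fact_lemma[of "j+1" N] unfolding d_def by (metis Suc_eq_plus1 Suc_leI)
  have 3: "fact (Suc d) = Suc d * (fact d :: nat)" by simp
  have "((N choose (j+1)) * fact (j+1)) * fact d = ((N choose j) * fact j * (N - j)) * fact d"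
  proof -
    have "((N choose (j+1)) * fact (j+1)) * fact d = fact (j+1) * fact d * (N choose (j+1))"
      by (simp only: ac_simps)
    also have "\<dots> = fact j * fact (Suc d) * (N choose j)" using 1 2 by simp
    also have "\<dots> = ((N choose j) * fact j * (N - j)) * fact d" unfolding 3 dj by (simp only: ac_simps)
    finally show ?thesis .
  qed
  moreover have "(fact d :: nat) \<noteq> 0" by simp
  ultimately show ?thesis by simp
qed

lemma al_be_rel:
  "be N k - (int N + 1) * al N k + al N (k+1) = (if k = -1 then 1 else 0)"
proof -
  consider "k < -1" | "k = -1" | "0 \<le> k \<and> k < int N" | "k = int N" | "k > int N" by linarith
  then show ?thesis
  proof cases
    case 1 then show ?thesis by (simp add: al_def be_def)
  next
    case 2 then show ?thesis by (simp add: al_def be_def)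
  next
    case 3
    then obtain j where j: "k = int j" "j < N" by (metis nonneg_int_cases of_nat_less_iff)
    have s: "int ((N choose (j+1)) * fact (j+1)) = int ((N choose j) * fact j * (N - j))"
      using choose_fact_step[OF j(2)] by simp
    have le: "j + 1 \<le> N" using j by simp
    have "al N (int (j+1)) = int (N choose (j+1)) * fact (j+1)"
      unfolding al_def using le by (simp only: nat_int of_nat_le_iff of_nat_0_le_iff simp_thms if_True)
    then have "al N (k+1) = int (N choose (j+1)) * fact (j+1)" using j by (simp add: add.commute)
    also have "\<dots> = int ((N choose (j+1)) * fact (j+1))" by (simp only: of_nat_mult of_nat_fact)
    also have "\<dots> = int (N choose j) * fact j * (int N - int j)" using s j by (simp add: of_nat_diff)
    finally have "al N (k+1) = int (N choose j) * fact j * (int N - int j)" .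
    then show ?thesis using j by (simp add: al_def be_def algebra_simps)
  next
    case 4 then show ?thesis by (simp add: al_def be_def algebra_simps)
  next
    case 5 then show ?thesis by (simp add: al_def be_def)
  qed
qed

lemma coeff1: "pascal2_coeff m 1 k = int ((m-1) choose k) * fact k"
  unfolding pascal2_coeff_def pascal_entry_def
  by (simp add: map_replicate_const sum_list_replicate prod_list_replicate)

lemma coeff2: "pascal2_coeff m 2 k = int ((m-1) choose k) * fact (k+1)"
proof -
  have pe: "pascal_entry (2 # replicate (m - 1 - k) 1 @ replicate k 2) = fact (k+1)"
    unfolding pascal_entry_def
    by (simp add: map_replicate_const sum_list_replicate prod_list_replicate del: fact_Suc)
  show ?thesis unfolding pascal2_coeff_def by (simp only: pe of_nat_fact)
qed

lemma coeff1': "pascal2_coeff m (Suc 0) k = int ((m-1) choose k) * fact k"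
  using coeff1 by simp

lemma A_carrier: "pascal2_sylvester m \<in> carrier_mat (2*(m-1)) (2*(m-1))"
  unfolding pascal2_sylvester_def by simp

lemma A_entry:
  assumes m: "m = N+1" and r: "r < 2*N" and c: "c < 2*N"
  shows "pascal2_sylvester m $$ (r,c) =
    (if r < N then al N (int c - int r) else be N (int c - int (r - N)))"
proof (cases "r < N")
  case True
  then show ?thesis using r c m
    unfolding pascal2_sylvester_def al_def
    by (auto simp: coeff1 coeff1' nat_diff_distrib' of_nat_diff)
next
  case False
  then show ?thesis using r c m
    unfolding pascal2_sylvester_def be_def Let_def
    by (auto simp: coeff2 nat_diff_distrib' of_nat_diff)
qed

definition Lm :: "nat \<Rightarrow> int mat" where
  "Lm N = mat (2*N) (2*N) (\<lambda>(r,j). if r < N then (if j = r then 1 else 0)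
     else if r = N then (if j = N then 1 else 0) + (if j = 0 then -(int N+1) else 0)
     else (if j = r then 1 else 0) + (if j = r - N then -(int N+1) else 0)
        + (if j = r - N - 1 then 1 else 0))"

lemma sum_delta_mult:
  fixes a n :: nat
  assumes "a < n"
  shows "(\<Sum>j\<in>{0..<n}. (if j = a then x else 0) * (g j :: int)) = x * g a"
proof -
  have "(\<Sum>j\<in>{0..<n}. (if j = a then x else 0) * g j) = (\<Sum>j\<in>{0..<n}. if j = a then x * g j else 0)"
    by (rule sum.cong) auto
  also have "\<dots> = (if a \<in> {0..<n} then x * g a else 0)" by (rule sum.delta) simp
  also have "\<dots> = x * g a" using assms by simp
  finally show ?thesis .
qed

lemma det_Lm: "det (Lm N) = 1"
proof -
  have "det (Lm N) = prod_list (diag_mat (Lm N))"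
    by (rule det_lower_triangular[of "2*N"]) (auto simp: Lm_def)
  also have "\<dots> = (\<Prod>i = 0..<2*N. Lm N $$ (i,i))" by (simp add: prod_list_diag_prod Lm_def)
  also have "\<dots> = 1" by (rule prod.neutral) (auto simp: Lm_def)
  finally show ?thesis .
qed

lemma B_entry:
  assumes m: "m = N+1" and N: "N \<ge> 1" and r: "r < 2*N" and c: "c < 2*N"
  shows "(Lm N * pascal2_sylvester m) $$ (r,c) =
    (if r < N then al N (int c - int r) else if r = N then - al N (int c + 1)
     else (if c = r - N - 1 then 1 else 0))"
proof -
  let ?A = "pascal2_sylvester m"
  have dims: "dim_row (Lm N) = 2*N" "dim_col ?A = 2*N" "dim_row ?A = 2*N" "dim_col (Lm N) = 2*N"
    using m by (auto simp: Lm_def pascal2_sylvester_def)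
  have e: "(Lm N * ?A) $$ (r,c) = (\<Sum>j\<in>{0..<2*N}. Lm N $$ (r,j) * ?A $$ (j,c))"
    using r c dims by (simp add: scalar_prod_def)
  show ?thesis
  proof (cases "r < N")
    case True
    have "(\<Sum>j\<in>{0..<2*N}. Lm N $$ (r,j) * ?A $$ (j,c)) = (\<Sum>j\<in>{0..<2*N}. (if j = r then 1 else 0) * ?A $$ (j,c))"
      by (rule sum.cong) (use True r in \<open>auto simp: Lm_def\<close>)
    also have "\<dots> = ?A $$ (r,c)" using r by (simp add: sum_delta_mult)
    finally show ?thesis using e True A_entry[OF m r c] by simp
  next
    case False
    note F = False
    show ?thesis
    proof (cases "r = N")
      case True
      have "(\<Sum>j\<in>{0..<2*N}. Lm N $$ (r,j) * ?A $$ (j,c)) =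
          (\<Sum>j\<in>{0..<2*N}. (if j = N then 1 else 0) * ?A $$ (j,c))
        + (\<Sum>j\<in>{0..<2*N}. (if j = 0 then -(int N+1) else 0) * ?A $$ (j,c))"
      proof -
        have Lr: "Lm N $$ (r,j) = (if j = N then 1 else 0) + (if j = 0 then -(int N+1) else 0)" if "j < 2*N" for j
          using that True r unfolding Lm_def by simp
        show ?thesis unfolding sum.distrib[symmetric]
          by (rule sum.cong[OF refl]) (simp add: Lr distrib_right)
      qed
      also have "\<dots> = ?A $$ (N,c) - (int N + 1) * ?A $$ (0,c)" using r N True apply (simp add: sum_delta_mult) apply (simp add: algebra_simps) done
      also have "\<dots> = be N (int c) - (int N + 1) * al N (int c)"
        using A_entry[OF m _ c, of N] A_entry[OF m _ c, of 0] N by simp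
      also have "\<dots> = - al N (int c + 1)" using al_be_rel[of N "int c"] by simp
      finally have s: "(\<Sum>j\<in>{0..<2*N}. Lm N $$ (r,j) * ?A $$ (j,c)) = - al N (int c + 1)" .
      have "(Lm N * ?A) $$ (r,c) = - al N (int c + 1)" using e s by (rule trans)
      then show ?thesis using F True by simp
    next
      case False
      have "\<exists>i. 1 \<le> i \<and> i < N \<and> r = N + i" using False F r by presburger
      then obtain i where i1: "i \<ge> 1" "i < N" "r = N + i" by blast
      have "(\<Sum>j\<in>{0..<2*N}. Lm N $$ (r,j) * ?A $$ (j,c)) =
          (\<Sum>j\<in>{0..<2*N}. (if j = r then 1 else 0) * ?A $$ (j,c))
        + (\<Sum>j\<in>{0..<2*N}. (if j = i then -(int N+1) else 0) * ?A $$ (j,c))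
        + (\<Sum>j\<in>{0..<2*N}. (if j = i - 1 then 1 else 0) * ?A $$ (j,c))"
      proof -
        have Lr: "Lm N $$ (r,j) = (if j = r then 1 else 0) + (if j = i then -(int N+1) else 0)
            + (if j = i - 1 then 1 else 0)" if "j < 2*N" for j
          using that i1 unfolding Lm_def by simp
        show ?thesis unfolding sum.distrib[symmetric]
          by (rule sum.cong[OF refl]) (simp add: Lr distrib_right)
      qed
      also have "\<dots> = ?A $$ (r,c) - (int N + 1) * ?A $$ (i,c) + ?A $$ (i - 1, c)"
        using r i1 apply (simp add: sum_delta_mult) apply (simp add: algebra_simps) done
      also have "\<dots> = be N (int c - int i) - (int N + 1) * al N (int c - int i) + al N (int c - int i + 1)"
      proof -
        have A1: "?A $$ (r,c) = be N (int c - int i)" using A_entry[OF m r c] i1 by simp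
        have A2: "?A $$ (i,c) = al N (int c - int i)" using A_entry[OF m _ c, of i] i1 by simp
        have d: "int c - int (i - 1) = int c - int i + 1" using i1 by simp
        have lt: "i - 1 < 2*N" "i - 1 < N" using i1 by auto
        have "?A $$ (i-1,c) = al N (int c - int (i-1))" using A_entry[OF m lt(1) c] lt(2) by simp
        then have A3: "?A $$ (i-1,c) = al N (int c - int i + 1)" unfolding d .
        show ?thesis unfolding A1 A2 A3 ..
      qed
      also have "\<dots> = (if int c - int i = -1 then 1 else 0)" by (rule al_be_rel)
      also have "\<dots> = (if c = r - N - 1 then 1 else 0)"
      proof -
        have e1: "(int c - int i = -1) = (c + 1 = i)" by linarith
        have e2: "(c + 1 = i) = (c = r - N - 1)" using i1 by arith
        show ?thesis unfolding e1 e2 ..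
      qed
      finally have s: "(\<Sum>j\<in>{0..<2*N}. Lm N $$ (r,j) * ?A $$ (j,c)) = (if c = r - N - 1 then 1 else 0)" .
      have "(Lm N * ?A) $$ (r,c) = (if c = r - N - 1 then 1 else 0)" using e s by (rule trans)
      then show ?thesis using F False by simp
    qed
  qed
qed

lemma sign_lemma:
  assumes "N \<ge> (1::nat)"
  shows "(-1::int)^(N-1) * ((-1)^(N*N) * (-1)) = 1"
proof -
  have "(-1::int)^(N-1) * ((-1)^(N*N) * (-1)) = (-1)^((N-1) + N*N + 1)"
    by (simp only: power_add power_one_right mult.assoc)
  also have "(N-1) + N*N + 1 = N + N*N" using assms by simp
  also have "even (N + N*N)" by simp
  then have "(-1::int)^(N + N*N) = 1" by (simp only: minus_one_power_iff if_True)
  finally show ?thesis .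
qed

lemma al_N: "al N (int N) = fact N"
  by (simp add: al_def)

lemma diag_prod:
  assumes N: "N \<ge> 1"
  shows "(\<Prod>s = 0..<2*N. (if s < N-1 then 1 else if s = N-1 then - fact N else fact N :: int))
     = - fact N * fact N ^ N"
  (is "prod ?f _ = _")
proof -
  have "prod ?f {0..<2*N} = prod ?f {0..<N-1} * prod ?f {N-1..<2*N}"
    by (rule prod.atLeastLessThan_concat[symmetric]) auto
  also have "prod ?f {0..<N-1} = 1" by (rule prod.neutral) auto
  also have "prod ?f {N-1..<2*N} = ?f (N-1) * prod ?f {Suc (N-1)..<2*N}"
    by (rule prod.atLeast_Suc_lessThan) (use N in auto)
  also have "Suc (N-1) = N" using N by simp
  also have "prod ?f {N..<2*N} = prod (\<lambda>_. fact N) {N..<2*N}"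
    by (rule prod.cong) (use N in auto)
  also have "\<dots> = fact N ^ N" by simp
  finally show ?thesis by simp
qed

theorem theorem5p1:
  fixes m :: nat
  assumes "m \<ge> 2"
  shows "pascal_det2 m = (fact (m - 1)) ^ m"
proof -
  define N where "N = m - 1"
  have N1: "N \<ge> 1" and m: "m = N + 1" using assms by (auto simp: N_def)
  let ?A = "pascal2_sylvester m"
  define B where "B = Lm N * ?A"
  have Ac: "?A \<in> carrier_mat (2*N) (2*N)" using A_carrier[of m] m by simp
  have Lc: "Lm N \<in> carrier_mat (2*N) (2*N)" by (simp add: Lm_def)
  have Bc: "B \<in> carrier_mat (2*N) (2*N)" using Ac Lc unfolding B_def by simp
  have dB: "det B = det ?A" unfolding B_def using det_mult[OF Lc Ac] det_Lm by simp
  define D where "D = mat (2*N) (2*N) (\<lambda>(i,j). B $$ (if i < N then i else if i < N + (N-1) then i + 1 else i - (N-1), j))"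
  have d1: "det B = (-1)^(1*(N-1)) * det D" unfolding D_def
    by (rule det_swap_final_rows[OF Bc]) (use N1 in simp)
  have Dc: "D \<in> carrier_mat (N+N) (N+N)" by (simp add: D_def mult_2)
  define E where "E = mat (N+N) (N+N) (\<lambda>(i,j). D $$ (if i < N then i + N else i - N, j))"
  have d2: "det D = (-1)^(N*N) * det E" unfolding E_def by (rule det_swap_rows[OF Dc])
  have Ec: "E \<in> carrier_mat (2*N) (2*N)" by (simp add: E_def mult_2)
  have E_entry: "E $$ (s,c) = (if s < N-1 then (if c = s then 1 else 0)
      else if s = N-1 then - al N (int c + 1) else al N (int c - int (s - N)))"
    if s: "s < 2*N" and c: "c < 2*N" for s c
  proof -
    have Es: "E $$ (s,c) = D $$ (if s < N then s + N else s - N, c)"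
      using s c unfolding E_def by (simp add: mult_2)
    show ?thesis
    proof (cases "s < N-1")
      case True
      have lt: "s + N < N + (N - 1)" "s + N < 2*N" using True by auto
      have "D $$ (s + N, c) = B $$ (s + N + 1, c)" using lt c unfolding D_def by simp
      also have "\<dots> = (if c = s then 1 else 0)" unfolding B_def
        using B_entry[OF m N1 _ c, of "s+N+1"] True N1 by simp
      moreover have "s < N" using True by simp
      ultimately show ?thesis using Es True by simp
    next
      case F: False
      show ?thesis
      proof (cases "s = N-1")
        case True
        have lt: "\<not> s + N < N + (N - 1)" "s + N < 2*N" "s + N - (N - 1) = N" using True N1 by auto
        have "D $$ (s + N, c) = B $$ (N, c)" using lt c unfolding D_def by simp
        also have "\<dots> = - al N (int c + 1)" unfolding B_def
          using B_entry[OF m N1 _ c, of N] N1 by simp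
        finally show ?thesis using Es True N1 by simp
      next
        case False
        then have sN: "s \<ge> N" using F by simp
        have lt: "s - N < N" "s - N < 2*N" using sN s by auto
        have "D $$ (s - N, c) = B $$ (s - N, c)" using lt c unfolding D_def by simp
        also have "\<dots> = al N (int c - int (s - N))" unfolding B_def
          using B_entry[OF m N1 _ c, of "s - N"] sN s by simp
        finally show ?thesis using Es F False sN by simp
      qed
    qed
  qed
  have detE: "det E = prod_list (diag_mat E)"
  proof (rule det_lower_triangular[OF _ Ec])
    fix i j assume ij: "i < j" "j < 2*N"
    show "E $$ (i,j) = 0"
    proof -
      have "E $$ (i,j) = (if i < N-1 then (if j = i then 1 else 0)
        else if i = N-1 then - al N (int j + 1) else al N (int j - int (i - N)))"
        using E_entry[of i j] ij by simp
      also have "\<dots> = 0" using ij by (auto simp: al_def)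
      finally show ?thesis .
    qed
  qed
  have "prod_list (diag_mat E) = (\<Prod>s = 0..<2*N. E $$ (s,s))"
    using Ec by (simp add: prod_list_diag_prod)
  also have "\<dots> = (\<Prod>s = 0..<2*N. (if s < N-1 then 1 else if s = N-1 then - fact N else fact N :: int))"
  proof (rule prod.cong[OF refl])
    fix s assume "s \<in> {0..<2*N}"
    then have s: "s < 2*N" by simp
    show "E $$ (s,s) = (if s < N-1 then 1 else if s = N-1 then - fact N else fact N)"
    proof (cases "s < N - 1")
      case True then show ?thesis using E_entry[OF s s] by simp
    next
      case False
      show ?thesis
      proof (cases "s = N - 1")
        case True
        have "int s + 1 = int N" using True N1 by simp
        then show ?thesis using E_entry[OF s s] True N1 al_N[of N] by simp
      next
        case F2: False
        have "int s - int (s - N) = int N" using F2 False by simp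
        then show ?thesis using E_entry[OF s s] False F2 al_N[of N] by simp
      qed
    qed
  qed
  also have "\<dots> = - fact N * fact N ^ N" by (rule diag_prod[OF N1])
  finally have pE: "det E = - fact N * fact N ^ N" using detE by simp
  have "pascal_det2 m = det ?A" by (simp add: pascal_det2_def)
  also have "\<dots> = (-1)^(N-1) * ((-1)^(N*N) * (- fact N * fact N ^ N))"
    using dB d1 d2 pE by simp
  also have "\<dots> = ((-1)^(N-1) * ((-1)^(N*N) * (-1))) * (fact N * fact N ^ N)"
    by (simp add: algebra_simps)
  also have "\<dots> = fact N ^ (N+1)" using sign_lemma[OF N1] by simp
  finally show ?thesis using m by simp
qed

end
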